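(* For every integer $\ell\ge1$ there is a constant $\tilde C_\ell>0$ depending on $\ell$ but not on $\eta$ such that for all $x\in\mathbb R^d$, $0\le s<1$ and $0<\eta<1$, $$\mathbb E|X^x_s-x|^{2\ell}\le\tilde C_\ell(1+V^\ell(x))s^\ell,\qquad\mathbb E|X^x_\eta-\tilde X^{\eta,x}_1|^{2\ell}\le\tilde C_\ell(1+V^\ell(x))\eta^{3\ell}.$$
   Context: Fix $d\ge1$, $\alpha>0$, $\beta\in\mathbb R$, $p\in\mathbb R^d$ with nonnegative entries summing to $1$, $\mathrm e=(1,\dots,1)'$, positive rates $v$, a sub-stochastic matrix $P$ with $P_{ii}=0$ and $I-P$ invertible; $R=(I-P')\mathrm{diag}(v)$, assume $\mathrm e'R^{-1}p=1$, $\gamma=R^{-1}p$. $\sigma$ is a $d\times d$ matrix with $\sigma\sigma'=\mathrm{diag}(p)c_a^2+H^{(0)}+\sum_{k}\gamma_kv_kH^{(k)}+(I-P')\mathrm{diag}(v)\mathrm{diag}(\gamma)(I-P)$, $c_a^2>0$, $H^{(k)}_{ii}=P_{ki}(1-P_{ki})$, $H^{(k)}_{ij}=-P_{ki}P_{kj}$ ($i\ne j$), $H^{(0)}_{ii}=p_i(1-p_i)$, $H^{(0)}_{ij}=-p_ip_j$ ($i\ne j$), and $\xi'\sigma\sigma'\xi\ge c\,\xi'\xi$ for some $c>0$. $g(x)=-\beta p-Rx+(R-\alpha I)p(\mathrm e'x)^+$; $X^x$ solves $\mathrm dX_t=g(X_t)\mathrm dt+\sigma\mathrm dB_t$, $X_0=x$,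 and the Euler–Maruyama step is coupled with the same Brownian motion: $\tilde X^{\eta,x}_1=x+g(x)\eta+\sigma B_\eta$. $V$ is the Lyapunov function $V(y)=(\mathrm e'y)^2+\kappa[y-p\phi(\mathrm e'y)]'\tilde Q[y-p\phi(\mathrm e'y)]+\hat c_2$ of Dieker–Gao type: $\tilde Q$ positive definite with $\sum|\tilde Q_{ij}|=1$, $\tilde Q(-R)+(-R)'\tilde Q<0$, $\tilde Q(-(I-p\mathrm e')R)+(-R'(I-\mathrm ep'))\tilde Q\le0$; $\phi(z)=z$ ($z\ge0$), $-\frac12$ ($z\le-1$), $-\frac12z^4-z^3+z$ ($-1<z<0$); $\kappa>0$ chosen so that $\mathcal A\tilde V\le-c_1\tilde V+\check c_1$ for the function $\tilde V=V-\hat c_2$ (with $\mathcal A\varphi=\langle\nabla\varphi,g\rangle+\frac12\sum(\sigma\sigma')_{ij}\partial_{ij}\varphi$, $c_1>0$); $\hat c_2>0$ is such that $\hat c_1|y|^2-\hat c_2\le\tilde V(y)\le\hat C_1|y|^2+\hat C_2$ for positive constants $\hat c_1,\hat C_1,\hat C_2$. *)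

theory Defs
  imports "HOL-Analysis.Analysis" "HOL-Probability.Probability"
begin

text \<open>Diagonal matrix from a vector, all-ones vector.\<close>
definition diagm :: "real^'d \<Rightarrow> real^'d^'d" where
  "diagm v = (\<chi> i j. if i = j then v $ i else 0)"

definition outerp :: "real^'d \<Rightarrow> real^'d \<Rightarrow> real^'d^'d" where
  "outerp u w = (\<chi> i j. u $ i * w $ j)"

definition onevec :: "real^'d" where
  "onevec = (\<chi> i. 1)"

text \<open>H^(0) and H^(k) from the covariance formula.\<close>
definition H0 :: "real^'d \<Rightarrow> real^'d^'d" where
  "H0 p = (\<chi> i j. if i = j then p $ i * (1 - p $ i) else - (p $ i * p $ j))"

definition Hk :: "real^'d^'d \<Rightarrow> 'd \<Rightarrow> real^'d^'d" where
  "Hk P k = (\<chi> i j. if i = j then P $ k $ i * (1 - P $ k $ i) else - (P $ k $ i * P $ k $ j))"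

text \<open>The drift g.\<close>
definition drift :: "real \<Rightarrow> real \<Rightarrow> real^'d \<Rightarrow> real^'d^'d \<Rightarrow> real^'d \<Rightarrow> real^'d" where
  "drift \<alpha> \<beta> p R x = - (\<beta> *\<^sub>R p) - R *v x + max 0 (onevec \<bullet> x) *\<^sub>R ((R - \<alpha> *\<^sub>R mat 1) *v p)"

text \<open>The smoothing function phi of Dieker--Gao.\<close>
definition phi :: "real \<Rightarrow> real" where
  "phi z = (if z \<ge> 0 then z else if z \<le> -1 then - 1/2 else - (1/2) * z^4 - z^3 + z)"

text \<open>Lyapunov function V (with additive constant c2).\<close>
definition lyapV :: "real^'d^'d \<Rightarrow> real \<Rightarrow> real \<Rightarrow> real^'d \<Rightarrow> real^'d \<Rightarrow> real" where
  "lyapV Q \<kappa> c2 p y =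
     (let w = y - phi (onevec \<bullet> y) *\<^sub>R p in (onevec \<bullet> y)\<^sup>2 + \<kappa> * (w \<bullet> (Q *v w)) + c2)"

text \<open>Partial derivatives and the generator A of the diffusion.\<close>
definition pderiv_i :: "'d \<Rightarrow> (real^'d \<Rightarrow> real) \<Rightarrow> real^'d \<Rightarrow> real" where
  "pderiv_i i f y = deriv (\<lambda>t. f (y + t *\<^sub>R axis i 1)) 0"

definition generator :: "(real^'d \<Rightarrow> real^'d) \<Rightarrow> real^'d^'d \<Rightarrow> (real^'d \<Rightarrow> real) \<Rightarrow> real^'d \<Rightarrow> real" where
  "generator g S f y =
     (\<Sum>i\<in>UNIV. pderiv_i i f y * g y $ i)
     + 1/2 * (\<Sum>i\<in>UNIV. \<Sum>j\<in>UNIV. S $ i $ j * pderiv_i i (pderiv_i j f) y)"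

text \<open>Standard d-dimensional Brownian motion on a probability space M
  (coordinates are independent standard one-dimensional Brownian motions):
  B_0 = 0, continuous paths, and for any times 0 <= t_0 < ... < t_n the
  coordinate increments over the successive intervals are independent
  centered normals with variance equal to the interval length.\<close>
definition brownian_motion :: "'a measure \<Rightarrow> (real \<Rightarrow> 'a \<Rightarrow> real^'d) \<Rightarrow> bool" where
  "brownian_motion M B \<longleftrightarrow>
     prob_space M \<and>
     (\<forall>t\<ge>0. B t \<in> borel_measurable M) \<and>
     (\<forall>\<omega>\<in>space M. B 0 \<omega> = 0 \<and> continuous_on {0..} (\<lambda>t. B t \<omega>)) \<and>
     (\<forall>(n::nat) (t::nat \<Rightarrow> real). 0 \<le> t 0 \<and> (\<forall>k<n. t k < t (Suc k)) \<longrightarrow>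
        prob_space.indep_vars M (\<lambda>_. borel)
          (\<lambda>(k, i) \<omega>. B (t (Suc k)) \<omega> $ i - B (t k) \<omega> $ i) ({..<n} \<times> (UNIV :: 'd set)) \<and>
        (\<forall>k<n. \<forall>i::'d. distributed M lborel (\<lambda>\<omega>. B (t (Suc k)) \<omega> $ i - B (t k) \<omega> $ i)
            (\<lambda>z. ennreal (normal_density 0 (sqrt (t (Suc k) - t k)) z))))"

text \<open>X x is the (pathwise) solution of dX = g(X) dt + sigma dB, X_0 = x.\<close>
definition solves_sde :: "'a measure \<Rightarrow> (real^'d \<Rightarrow> real^'d) \<Rightarrow> real^'d^'d \<Rightarrow> (real \<Rightarrow> 'a \<Rightarrow> real^'d)
    \<Rightarrow> real^'d \<Rightarrow> (real \<Rightarrow> 'a \<Rightarrow> real^'d) \<Rightarrow> bool" where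
  "solves_sde M g \<sigma> B x X \<longleftrightarrow>
     (\<forall>t\<ge>0. X t \<in> borel_measurable M) \<and>
     (\<forall>\<omega>\<in>space M. continuous_on {0..} (\<lambda>t. X t \<omega>) \<and>
        (\<forall>t\<ge>0. X t \<omega> = x + integral {0..t} (\<lambda>r. g (X r \<omega>)) + \<sigma> *v B t \<omega>))"

end

theory Submission
  imports Defs
begin


lemma gronwall_int:
  fixes D f :: "real \<Rightarrow> real"
  assumes cD: "continuous_on {0..1} D" and cf: "continuous_on {0..1} f"
  and L: "L \<ge> 0" and f0: "\<forall>u\<in>{0..1}. f u \<ge> 0"
  and H: "\<forall>r\<in>{0..1}. D r \<le> L * integral {0..r} D + f r"
  and r: "r \<in> {0..1}"
  shows "integral {0..r} D \<le> exp L * integral {0..r} f"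
proof -
  define \<psi> where "\<psi> u = exp (- L * u) * integral {0..u} D - integral {0..u} f" for u
  have cID: "continuous_on {0..1} (\<lambda>u. integral {0..u} D)"
    by (intro indefinite_integral_continuous_1 integrable_continuous_real cD)
  have cIf: "continuous_on {0..1} (\<lambda>u. integral {0..u} f)"
    by (intro indefinite_integral_continuous_1 integrable_continuous_real cf)
  have cpsi: "continuous_on {0..r} \<psi>"
    unfolding \<psi>_def using r
    by (intro continuous_intros continuous_on_subset[OF cID] continuous_on_subset[OF cIf]) auto
  have "\<psi> r \<le> \<psi> 0"
  proof (rule DERIV_nonpos_imp_decreasing_open[of 0 r])
    show "0 \<le> r" using r by auto
    show "continuous_on {0..r} \<psi>" by (rule cpsi)
    fix t assume t: "0 < t" "t < r"
    have ti: "t \<in> interior {0..1::real}" using t r by auto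
    have tI: "t \<in> {0..1}" using t r by auto
    have dD: "((\<lambda>u. integral {0..u} D) has_real_derivative D t) (at t)"
      using integral_has_real_derivative[OF cD tI] at_within_interior[OF ti] by simp
    have df: "((\<lambda>u. integral {0..u} f) has_real_derivative f t) (at t)"
      using integral_has_real_derivative[OF cf tI] at_within_interior[OF ti] by simp
    have dpsi: "(\<psi> has_real_derivative
        (exp (- L * t) * (- L) * integral {0..t} D + exp (- L * t) * D t - f t)) (at t)"
      unfolding \<psi>_def
      by (auto intro!: derivative_eq_intros dD df simp: algebra_simps)
    have "exp (- L * t) * (- L) * integral {0..t} D + exp (- L * t) * D t
          = exp (- L * t) * (D t - L * integral {0..t} D)" by (simp add: algebra_simps)
    also have "\<dots> \<le> exp (- L * t) * f t"
    proof (rule mult_left_mono)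
      show "D t - L * integral {0..t} D \<le> f t" using H tI by (smt (verit))
    qed simp
    also have "\<dots> \<le> f t"
      using f0 tI L t by (intro mult_left_le_one_le) auto
    finally show "\<exists>y. (\<psi> has_real_derivative y) (at t) \<and> y \<le> 0"
      using dpsi by (intro exI[of _ "exp (- L * t) * (- L) * integral {0..t} D + exp (- L * t) * D t - f t"]) auto
  qed
  then have "exp (- L * r) * integral {0..r} D \<le> integral {0..r} f"
    unfolding \<psi>_def by simp
  then have "integral {0..r} D \<le> exp (L * r) * integral {0..r} f"
    by (simp add: exp_minus field_simps)
  also have "\<dots> \<le> exp L * integral {0..r} f"
  proof (rule mult_right_mono)
    show "exp (L * r) \<le> exp L" using r L by (simp add: mult_left_le)
    show "0 \<le> integral {0..r} f" using f0 r by (intro integral_nonneg integrable_continuous_real continuous_on_subset[OF cf]) auto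
  qed
  finally show ?thesis .
qed



lemma pathwise:
  fixes Y b :: "real \<Rightarrow> real^'d" and g :: "real^'d \<Rightarrow> real^'d" and \<sigma> :: "real^'d^'d"
  assumes cY: "continuous_on {0..1} Y" and cb: "continuous_on {0..1} b"
  and Lip: "\<forall>y z. norm (g y - g z) \<le> L * norm (y - z)" and L: "L \<ge> 0"
  and K: "\<forall>z. norm (\<sigma> *v z) \<le> K * norm z" and K0: "K \<ge> 0"
  and eq: "\<forall>t\<in>{0..1}. Y t = x + integral {0..t} (\<lambda>r. g (Y r)) + \<sigma> *v b t"
  and t: "t \<in> {0..1}"
  shows "norm (Y t - x) \<le> (L * exp L + 1) * t * norm (g x)
           + L * exp L * K * integral {0..t} (\<lambda>u. norm (b u)) + K * norm (b t)"
    and "norm (Y t - (x + t *\<^sub>R g x + \<sigma> *v b t)) \<le> L * exp L * t\<^sup>2 * norm (g x)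
           + L * exp L * K * integral {0..t} (\<lambda>u. norm (b u))"
proof -
  have cg: "continuous_on UNIV g"
    by (rule lipschitz_on_continuous_on[of L], rule lipschitz_onI) (use Lip L in \<open>auto simp: dist_norm\<close>)
  have cG: "continuous_on {0..1} (\<lambda>u. g (Y u) - g x)"
    by (intro continuous_intros continuous_on_compose2[OF cg cY]) auto
  define D where "D u = norm (Y u - x)" for u
  have cD: "continuous_on {0..1} D" unfolding D_def by (intro continuous_intros cY)
  define f where "f u = u * norm (g x) + K * norm (b u)" for u
  have cf: "continuous_on {0..1} f" unfolding f_def by (intro continuous_intros cb)
  have f0: "\<forall>u\<in>{0..1}. f u \<ge> 0" unfolding f_def using K0 by auto
  have key: "Y r - x = integral {0..r} (\<lambda>u. g (Y u) - g x) + r *\<^sub>R g x + \<sigma> *v b r"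
    if r: "r \<in> {0..1}" for r
  proof -
    have i1: "(\<lambda>u. g (Y u)) integrable_on {0..r}"
      using r by (intro integrable_continuous_real continuous_on_compose2[OF cg continuous_on_subset[OF cY]]) auto
    have "integral {0..r} (\<lambda>u. g (Y u) - g x) = integral {0..r} (\<lambda>u. g (Y u)) - r *\<^sub>R g x"
      using r by (subst integral_diff[OF i1]) auto
    then show ?thesis using eq r by auto
  qed
  have nI: "norm (integral {0..r} (\<lambda>u. g (Y u) - g x)) \<le> L * integral {0..r} D"
    if r: "r \<in> {0..1}" for r
  proof -
    have "norm (integral {0..r} (\<lambda>u. g (Y u) - g x)) \<le> integral {0..r} (\<lambda>u. L * D u)"
      using r Lip unfolding D_def
      by (intro integral_norm_bound_integral integrable_continuous_real continuous_on_subset[OF cG]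
           continuous_intros continuous_on_subset[OF cY]) auto
    then show ?thesis by simp
  qed
  have H: "\<forall>r\<in>{0..1}. D r \<le> L * integral {0..r} D + f r"
  proof
    fix r :: real assume r: "r \<in> {0..1}"
    have "D r \<le> norm (integral {0..r} (\<lambda>u. g (Y u) - g x)) + norm (r *\<^sub>R g x) + norm (\<sigma> *v b r)"
      unfolding D_def key[OF r] by (meson norm_triangle_le norm_triangle_ineq order_refl add_mono)
    also have "\<dots> \<le> L * integral {0..r} D + f r"
      unfolding f_def using nI[OF r] K[rule_format, of "b r"] r by simp
    finally show "D r \<le> L * integral {0..r} D + f r" .
  qed
  have gr: "integral {0..t} D \<le> exp L * integral {0..t} f"
    by (rule gronwall_int[OF cD cf L f0 H t])
  have ib: "(\<lambda>u. norm (b u)) integrable_on {0..t}"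
    using t by (intro integrable_continuous_real continuous_intros continuous_on_subset[OF cb]) auto
  have "integral {0..t} f \<le> integral {0..t} (\<lambda>u. t * norm (g x) + K * norm (b u))"
    using t unfolding f_def
    by (intro integral_le integrable_continuous_real continuous_intros continuous_on_subset[OF cb])
       (auto intro: mult_right_mono)
  also have "\<dots> = t\<^sup>2 * norm (g x) + K * integral {0..t} (\<lambda>u. norm (b u))"
    using t ib integrable_on_cmult_left[OF ib, of K] by (subst integral_add) (auto simp: power2_eq_square)
  finally have If: "integral {0..t} f \<le> t\<^sup>2 * norm (g x) + K * integral {0..t} (\<lambda>u. norm (b u))" .
  have LD: "L * integral {0..t} D \<le> L * exp L * t\<^sup>2 * norm (g x)
           + L * exp L * K * integral {0..t} (\<lambda>u. norm (b u))"
  proof -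
    have "L * integral {0..t} D \<le> L * (exp L * (t\<^sup>2 * norm (g x) + K * integral {0..t} (\<lambda>u. norm (b u))))"
      using gr If L by (intro mult_left_mono) (auto intro: order.trans)
    then show ?thesis by (simp add: algebra_simps)
  qed
  show "norm (Y t - (x + t *\<^sub>R g x + \<sigma> *v b t)) \<le> L * exp L * t\<^sup>2 * norm (g x)
           + L * exp L * K * integral {0..t} (\<lambda>u. norm (b u))"
  proof -
    have "Y t - (x + t *\<^sub>R g x + \<sigma> *v b t) = integral {0..t} (\<lambda>u. g (Y u) - g x)"
      using key[OF t] by (simp add: algebra_simps)
    then show ?thesis using nI[OF t] LD by simp
  qed
  have "t\<^sup>2 \<le> t" using t by (auto simp: power2_eq_square intro: mult_left_le_one_le)
  then have "L * exp L * t\<^sup>2 * norm (g x) \<le> L * exp L * t * norm (g x)"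
    using L by (intro mult_right_mono mult_left_mono) auto
  then show "norm (Y t - x) \<le> (L * exp L + 1) * t * norm (g x)
           + L * exp L * K * integral {0..t} (\<lambda>u. norm (b u)) + K * norm (b t)"
  proof -
    have "D t \<le> L * integral {0..t} D + f t" using H t by blast
    then show ?thesis using LD \<open>L * exp L * t\<^sup>2 * norm (g x) \<le> L * exp L * t * norm (g x)\<close>
      unfolding D_def f_def by (simp add: algebra_simps)
  qed
qed



lemma young_pow:
  fixes a b :: real
  assumes "a \<ge> 0" "b \<ge> 0" "n \<ge> 1"
  shows "real n * a^(n-1) * b - (real n - 1) * a^n \<le> b^n"
proof (cases "a = 0")
  case True
  then show ?thesis using assms by (cases n; cases "n - 1") auto
next
  case False
  then have a: "a > 0" using assms by auto
  have "1 + real n * (b/a - 1) \<le> (1 + (b/a - 1))^n"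
    by (rule Bernoulli_inequality) (use a assms in auto)
  then have "1 + real n * (b/a - 1) \<le> (b/a)^n" by simp
  then have "a^n * (1 + real n * (b/a - 1)) \<le> a^n * (b/a)^n"
    using a by (intro mult_left_mono) auto
  also have "a^n * (b/a)^n = b^n" using a by (simp add: power_divide)
  also have "a^n * (1 + real n * (b/a - 1)) = real n * (a^n / a) * b - (real n - 1) * a^n"
    using a by (simp add: field_simps)
  also have "a^n / a = a^(n-1)" using a assms by (simp add: power_diff)
  finally show ?thesis .
qed

lemma int_pow_le:
  fixes h :: "real \<Rightarrow> real"
  assumes ch: "continuous_on {0..t} h" and h0: "\<And>u. u \<in> {0..t} \<Longrightarrow> h u \<ge> 0"
    and t: "t \<ge> 0" and n: "n \<ge> 1"
  shows "(integral {0..t} h)^n \<le> t^(n-1) * integral {0..t} (\<lambda>u. h u ^ n)"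
proof (cases "t = 0")
  case True
  then show ?thesis using n by (simp add: power_0_left)
next
  case False
  then have t: "t > 0" using t by auto
  define a where "a = integral {0..t} h / t"
  have ih: "h integrable_on {0..t}" by (rule integrable_continuous_real[OF ch])
  have ihc: "(\<lambda>u. c * h u) integrable_on {0..t}" for c by (intro integrable_continuous_real continuous_intros ch)
  have ihn: "(\<lambda>u. h u ^ n) integrable_on {0..t}" by (intro integrable_continuous_real continuous_intros ch)
  have Ih0: "integral {0..t} h \<ge> 0" using h0 by (intro integral_nonneg ih) auto
  have a0: "a \<ge> 0" unfolding a_def using Ih0 t by auto
  have "integral {0..t} (\<lambda>u. real n * a^(n-1) * h u - (real n - 1) * a^n) \<le> integral {0..t} (\<lambda>u. h u ^ n)"
    using h0 a0 n ihc ihn by (intro integral_le young_pow integrable_diff) auto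
  also have "integral {0..t} (\<lambda>u. real n * a^(n-1) * h u - (real n - 1) * a^n)
      = real n * a^(n-1) * integral {0..t} h - t * ((real n - 1) * a^n)"
    using t by (subst integral_diff) (auto intro: ihc)
  also have "real n * a^(n-1) * integral {0..t} h = real n * a^(n-1) * a * t"
    unfolding a_def using t by simp
  also have "real n * a^(n-1) * a * t - t * ((real n - 1) * a^n) = t * a^n"
    using n by (cases n) (auto simp: algebra_simps)
  finally have "t * a^n \<le> integral {0..t} (\<lambda>u. h u ^ n)" .
  then have "t^(n-1) * (t * a^n) \<le> t^(n-1) * integral {0..t} (\<lambda>u. h u ^ n)"
    using t by (intro mult_left_mono) auto
  moreover have "t^(n-1) * (t * a^n) = (integral {0..t} h)^n"
    unfolding a_def using t n by (cases n) (auto simp: power_divide field_simps)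
  ultimately show ?thesis by simp
qed



lemma sum_pow_le:
  fixes a :: "'i \<Rightarrow> real"
  assumes fin: "finite I" and ne: "I \<noteq> {}" and a0: "\<And>i. i \<in> I \<Longrightarrow> a i \<ge> 0"
  shows "(\<Sum>i\<in>I. a i)^n \<le> real (card I)^n * (\<Sum>i\<in>I. a i ^ n)"
proof -
  obtain j where j0: "j \<in> I" "a j = Max (a ` I)"
  proof -
    have "Max (a ` I) \<in> a ` I" using fin ne by (intro Max_in) auto
    then show ?thesis using that by force
  qed
  then have j: "j \<in> I" "\<And>i. i \<in> I \<Longrightarrow> a i \<le> a j"
    using fin by auto
  have "(\<Sum>i\<in>I. a i) \<le> (\<Sum>i\<in>I. a j)" using j by (intro sum_mono) auto
  then have "(\<Sum>i\<in>I. a i) \<le> real (card I) * a j" by simp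
  then have "(\<Sum>i\<in>I. a i)^n \<le> (real (card I) * a j)^n"
    using a0 by (intro power_mono) (auto intro: sum_nonneg)
  also have "\<dots> = real (card I)^n * a j ^ n" by (simp add: power_mult_distrib)
  also have "\<dots> \<le> real (card I)^n * (\<Sum>i\<in>I. a i ^ n)"
    using j a0 fin by (intro mult_left_mono member_le_sum) auto
  finally show ?thesis .
qed

lemma norm_pow_le_coords:
  fixes v :: "real^'d"
  shows "norm v ^ n \<le> real CARD('d) ^ n * (\<Sum>i\<in>UNIV. \<bar>v $ i\<bar> ^ n)"
proof -
  have "norm v ^ n \<le> (\<Sum>i\<in>UNIV. \<bar>v $ i\<bar>) ^ n" by (intro power_mono norm_le_l1_cart) auto
  also have "\<dots> \<le> real (card (UNIV::'d set))^n * (\<Sum>i\<in>UNIV. \<bar>v $ i\<bar> ^ n)"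
    by (rule sum_pow_le) auto
  finally show ?thesis by simp
qed

definition mom :: "nat \<Rightarrow> real" where "mom l = fact (2 * l) / (2 ^ l * fact l)"

lemma bm_coord_moment:
  fixes B :: "real \<Rightarrow> 'a \<Rightarrow> real^'d" and M :: "'a measure"
  assumes BM: "brownian_motion M B" and u: "u > 0"
  shows "(\<integral>\<^sup>+\<omega>. ennreal ((B u \<omega> $ i) ^ (2 * l)) \<partial>M) = ennreal (mom l * u ^ l)"
proof -
  define t where "t k = (if k = 0 then 0 else u)" for k :: nat
  have all: "\<And>n t. 0 \<le> t 0 \<Longrightarrow> (\<forall>k<n. t k < t (Suc k)) \<Longrightarrow> (\<forall>k<n. \<forall>i::'d. distributed M lborel (\<lambda>\<omega>. B (t (Suc k)) \<omega> $ i - B (t k) \<omega> $ i)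
            (\<lambda>z. ennreal (normal_density 0 (sqrt (t (Suc k) - t k)) z)))"
    using BM unfolding brownian_motion_def by blast
  have "\<forall>k<1. \<forall>i::'d. distributed M lborel (\<lambda>\<omega>. B (t (Suc k)) \<omega> $ i - B (t k) \<omega> $ i)
            (\<lambda>z. ennreal (normal_density 0 (sqrt (t (Suc k) - t k)) z))"
    by (rule all) (auto simp: t_def u)
  then have "distributed M lborel (\<lambda>\<omega>. B (t (Suc 0)) \<omega> $ i - B (t 0) \<omega> $ i)
            (\<lambda>z. ennreal (normal_density 0 (sqrt (t (Suc 0) - t 0)) z))"
    by blast
  then have dist: "distributed M lborel (\<lambda>\<omega>. B u \<omega> $ i - B 0 \<omega> $ i)
            (\<lambda>z. ennreal (normal_density 0 (sqrt u) z))" by (simp add: t_def)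
  have B0: "\<omega> \<in> space M \<Longrightarrow> B 0 \<omega> = 0" for \<omega> using BM unfolding brownian_motion_def by auto
  have "(\<integral>\<^sup>+\<omega>. ennreal ((B u \<omega> $ i) ^ (2 * l)) \<partial>M)
      = (\<integral>\<^sup>+\<omega>. ennreal ((B u \<omega> $ i - B 0 \<omega> $ i) ^ (2 * l)) \<partial>M)"
    by (intro nn_integral_cong) (simp add: B0)
  also have "\<dots> = (\<integral>\<^sup>+z. ennreal (normal_density 0 (sqrt u) z) * ennreal (z ^ (2 * l)) \<partial>lborel)"
    using distributed_nn_integral[OF dist, of "\<lambda>z. ennreal (z ^ (2 * l))"] by simp
  also have "\<dots> = (\<integral>\<^sup>+z. ennreal (normal_density 0 (sqrt u) z * (z - 0) ^ (2 * l)) \<partial>lborel)"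
    by (intro nn_integral_cong) (simp add: ennreal_mult)
  also have "\<dots> = ennreal (integral\<^sup>L lborel (\<lambda>z. normal_density 0 (sqrt u) z * (z - 0) ^ (2 * l)))"
    by (intro nn_integral_eq_integral integrable.intros[OF normal_moment_even])
       (use u in \<open>auto simp: power_mult\<close>)
  also have "integral\<^sup>L lborel (\<lambda>z. normal_density 0 (sqrt u) z * (z - 0) ^ (2 * l)) = mom l * u ^ l"
  proof -
    have su: "(sqrt u)\<^sup>2 = u" using u by simp
    have f: "(fact l :: real) > 0" by simp
    have "integral\<^sup>L lborel (\<lambda>z. normal_density 0 (sqrt u) z * (z - 0) ^ (2 * l)) = fact (2 * l) / ((2 / (sqrt u)\<^sup>2) ^ l * fact l)"
      using u by (subst integral_normal_moment_even) auto
    also have "\<dots> = mom l * u ^ l" unfolding su mom_def using u f by (simp add: power_divide)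
    finally show ?thesis .
  qed
  finally show ?thesis .
qed



lemma bm_meas:
  fixes B :: "real \<Rightarrow> 'a \<Rightarrow> real^'d" and M :: "'a measure"
  assumes BM: "brownian_motion M B" and u: "u \<ge> 0"
  shows "B u \<in> borel_measurable M"
  using BM u unfolding brownian_motion_def by auto

lemma bm_norm_moment:
  fixes B :: "real \<Rightarrow> 'a \<Rightarrow> real^'d" and M :: "'a measure"
  assumes BM: "brownian_motion M B" and u: "u \<ge> 0" and l: "l \<ge> 1"
  shows "(\<integral>\<^sup>+\<omega>. ennreal (norm (B u \<omega>) ^ (2 * l)) \<partial>M)
           \<le> ennreal (real CARD('d) ^ (2 * l) * real CARD('d) * mom l * u ^ l)"
proof (cases "u = 0")
  case True
  have B0: "\<omega> \<in> space M \<Longrightarrow> B 0 \<omega> = 0" for \<omega> using BM unfolding brownian_motion_def by auto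
  have "(\<integral>\<^sup>+\<omega>. ennreal (norm (B u \<omega>) ^ (2 * l)) \<partial>M) = (\<integral>\<^sup>+\<omega>. 0 \<partial>M)"
    using l by (intro nn_integral_cong) (simp add: B0 True)
  then show ?thesis by simp
next
  case False
  then have u: "u > 0" using u by auto
  have [measurable]: "B u \<in> borel_measurable M" by (rule bm_meas[OF BM]) (use u in auto)
  have cn: "(\<lambda>v::real^'d. v $ i) \<in> borel_measurable borel" for i
    by (intro borel_measurable_continuous_onI continuous_intros)
  have [measurable]: "(\<lambda>\<omega>. B u \<omega> $ i) \<in> borel_measurable M" for i
    by (rule measurable_compose[OF _ cn]) measurable
  have mi: "(\<lambda>\<omega>. ennreal ((B u \<omega> $ i) ^ (2 * l))) \<in> borel_measurable M" for i
    by measurable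
  have "(\<integral>\<^sup>+\<omega>. ennreal (norm (B u \<omega>) ^ (2 * l)) \<partial>M)
      \<le> (\<integral>\<^sup>+\<omega>. ennreal (real CARD('d) ^ (2 * l)) * (\<Sum>i\<in>UNIV. ennreal ((B u \<omega> $ i) ^ (2 * l))) \<partial>M)"
  proof (intro nn_integral_mono)
    fix \<omega>
    have "norm (B u \<omega>) ^ (2 * l) \<le> real CARD('d) ^ (2 * l) * (\<Sum>i\<in>UNIV. \<bar>B u \<omega> $ i\<bar> ^ (2 * l))"
      by (rule norm_pow_le_coords)
    also have "\<dots> = real CARD('d) ^ (2 * l) * (\<Sum>i\<in>UNIV. (B u \<omega> $ i) ^ (2 * l))"
      by (simp add: power_even_abs)
    finally have "ennreal (norm (B u \<omega>) ^ (2 * l)) \<le> ennreal (real CARD('d) ^ (2 * l) * (\<Sum>i\<in>UNIV. (B u \<omega> $ i) ^ (2 * l)))"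
      by (rule ennreal_leI)
    also have "\<dots> = ennreal (real CARD('d) ^ (2 * l)) * (\<Sum>i\<in>UNIV. ennreal ((B u \<omega> $ i) ^ (2 * l)))"
      by (simp add: ennreal_mult sum_nonneg zero_le_even_power)
    finally show "ennreal (norm (B u \<omega>) ^ (2 * l)) \<le> ennreal (real CARD('d) ^ (2 * l)) * (\<Sum>i\<in>UNIV. ennreal ((B u \<omega> $ i) ^ (2 * l)))" .
  qed
  also have "\<dots> = ennreal (real CARD('d) ^ (2 * l)) * (\<Sum>i\<in>UNIV. (\<integral>\<^sup>+\<omega>. ennreal ((B u \<omega> $ i) ^ (2 * l)) \<partial>M))"
  proof -
    have eq: "(\<integral>\<^sup>+\<omega>. (\<Sum>i\<in>UNIV. ennreal ((B u \<omega> $ i) ^ (2 * l))) \<partial>M) = (\<Sum>i\<in>UNIV. (\<integral>\<^sup>+\<omega>. ennreal ((B u \<omega> $ i) ^ (2 * l)) \<partial>M))"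
      by (rule nn_integral_sum) (rule mi)
    have m2: "(\<lambda>\<omega>. (\<Sum>i\<in>UNIV. ennreal ((B u \<omega> $ i) ^ (2 * l)))) \<in> borel_measurable M"
      using mi by (intro borel_measurable_sum) auto
    show ?thesis by (simp only: nn_integral_cmult[OF m2] eq)
  qed
  also have "\<dots> = ennreal (real CARD('d) ^ (2 * l)) * (\<Sum>i\<in>(UNIV::'d set). ennreal (mom l * u ^ l))"
    by (simp add: bm_coord_moment[OF BM u])
  also have "\<dots> = ennreal (real CARD('d) ^ (2 * l) * real CARD('d) * mom l * u ^ l)"
    using u by (simp add: ennreal_mult[symmetric] mom_def ennreal_of_nat_eq_real_of_nat mult.assoc)
  finally show ?thesis .
qed

lemma floor_seq:
  fixes y :: real
  shows "(\<lambda>n. real_of_int \<lfloor>real (Suc n) * y\<rfloor> / real (Suc n)) \<longlonglongrightarrow> y"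
proof -
  have lo: "y + - inverse (real (Suc n)) \<le> real_of_int \<lfloor>real (Suc n) * y\<rfloor> / real (Suc n)" for n
  proof -
    define N where "N = real (Suc n)"
    have N: "N > 0" unfolding N_def by simp
    have "N * y - 1 \<le> real_of_int \<lfloor>N * y\<rfloor>" by linarith
    then have "(N * y - 1) / N \<le> real_of_int \<lfloor>N * y\<rfloor> / N" using N by (intro divide_right_mono) auto
    moreover have "(N * y - 1) / N = y + - inverse N" using N by (simp add: field_simps)
    ultimately show ?thesis unfolding N_def by simp
  qed
  have hi: "real_of_int \<lfloor>real (Suc n) * y\<rfloor> / real (Suc n) \<le> y" for n
  proof -
    define N where "N = real (Suc n)"
    have N: "N > 0" unfolding N_def by simp
    have "real_of_int \<lfloor>N * y\<rfloor> \<le> N * y" by linarith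
    then have "real_of_int \<lfloor>N * y\<rfloor> / N \<le> (N * y) / N" using N by (intro divide_right_mono) auto
    then show ?thesis unfolding N_def by simp
  qed
  show ?thesis
    by (rule tendsto_sandwich[OF always_eventually always_eventually LIMSEQ_inverse_real_of_nat_add_minus tendsto_const])
       (use lo hi in auto)
qed

lemma bm_joint_meas:
  fixes B :: "real \<Rightarrow> 'a \<Rightarrow> real^'d" and M :: "'a measure"
  assumes BM: "brownian_motion M B"
  shows "(\<lambda>z. B (max 0 (snd z)) (fst z)) \<in> borel_measurable (M \<Otimes>\<^sub>M lborel)"
proof -
  define F where "F n z = B (max 0 (real_of_int \<lfloor>real (Suc n) * snd z\<rfloor> / real (Suc n))) (fst z)"
    for n :: nat and z :: "'a \<times> real"
  show ?thesis
  proof (rule borel_measurable_LIMSEQ_metric[of F])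
  show "F n \<in> borel_measurable (M \<Otimes>\<^sub>M lborel)" for n
  proof -
    have fm: "(\<lambda>z. B (max 0 (real_of_int i / real (Suc n))) (fst z)) \<in> borel_measurable (M \<Otimes>\<^sub>M lborel)" for i
        by (rule measurable_compose[OF measurable_fst bm_meas[OF BM]]) auto
    have gm: "(\<lambda>z. \<lfloor>real (Suc n) * snd z\<rfloor>) \<in> measurable (M \<Otimes>\<^sub>M lborel) (count_space UNIV)"
        by (rule measurable_compose[OF _ measurable_real_floor]) measurable
    have "(\<lambda>z. B (max 0 (real_of_int \<lfloor>real (Suc n) * snd z\<rfloor> / real (Suc n))) (fst z)) \<in> borel_measurable (M \<Otimes>\<^sub>M lborel)"
      apply (rule measurable_compose_countable'[where f="\<lambda>i z. B (max 0 (real_of_int i / real (Suc n))) (fst z)"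
         and g="\<lambda>z::'a\<times>real. \<lfloor>real (Suc n) * snd z\<rfloor>" and I=UNIV and M="M \<Otimes>\<^sub>M lborel" and N=borel])
      using fm gm by auto
    then show ?thesis unfolding F_def by simp
  qed
  fix z :: "'a \<times> real" assume z: "z \<in> space (M \<Otimes>\<^sub>M lborel)"
  then have zM: "fst z \<in> space M" by (auto simp: space_pair_measure)
  have cont: "continuous_on {0..} (\<lambda>t. B t (fst z))" using BM zM unfolding brownian_motion_def by auto
  have "(\<lambda>n. max 0 (real_of_int \<lfloor>real (Suc n) * snd z\<rfloor> / real (Suc n))) \<longlonglongrightarrow> max 0 (snd z)"
    by (intro tendsto_max tendsto_const floor_seq)
  from continuous_on_tendsto_compose[OF cont this] show "(\<lambda>n. F n z) \<longlonglongrightarrow> B (max 0 (snd z)) (fst z)"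
    unfolding F_def by auto
qed
qed



lemma bm_time_int:
  fixes B :: "real \<Rightarrow> 'a \<Rightarrow> real^'d" and M :: "'a measure"
  assumes BM: "brownian_motion M B" and s: "s \<ge> 0" and l: "l \<ge> 1"
  shows "(\<lambda>\<omega>. \<integral>\<^sup>+u. ennreal (indicator {0..s} u * norm (B u \<omega>) ^ (2 * l)) \<partial>lborel) \<in> borel_measurable M"
    and "(\<integral>\<^sup>+\<omega>. (\<integral>\<^sup>+u. ennreal (indicator {0..s} u * norm (B u \<omega>) ^ (2 * l)) \<partial>lborel) \<partial>M)
          \<le> ennreal (real CARD('d) ^ (2 * l) * real CARD('d) * mom l * s ^ l * s)"
proof -
  define cB where "cB = real CARD('d) ^ (2 * l) * real CARD('d) * mom l"
  have cB0: "cB \<ge> 0" unfolding cB_def mom_def by simp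
  define f where "f \<omega> u = ennreal (indicator {0..s} u * norm (B (max 0 u) \<omega>) ^ (2 * l))" for \<omega> u
  have eqi: "ennreal (indicator {0..s} u * norm (B u \<omega>) ^ (2 * l)) = f \<omega> u" for \<omega> u
    unfolding f_def by (cases "u \<in> {0..s}") auto
  have [measurable]: "(\<lambda>z. B (max 0 (snd z)) (fst z)) \<in> borel_measurable (M \<Otimes>\<^sub>M lborel)"
    by (rule bm_joint_meas[OF BM])
  have fm: "case_prod f \<in> borel_measurable (M \<Otimes>\<^sub>M lborel)"
  proof -
    have "(\<lambda>z. ennreal (indicator {0..s} (snd z) * norm (B (max 0 (snd z)) (fst z)) ^ (2 * l))) \<in> borel_measurable (M \<Otimes>\<^sub>M lborel)"
      by measurable
    moreover have "case_prod f = (\<lambda>z. ennreal (indicator {0..s} (snd z) * norm (B (max 0 (snd z)) (fst z)) ^ (2 * l)))"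
      unfolding f_def by (auto simp: fun_eq_iff)
    ultimately show ?thesis by simp
  qed
  have PS: "prob_space M" using BM unfolding brownian_motion_def by auto
  interpret pair_sigma_finite M lborel
    by (intro pair_sigma_finite.intro prob_space_imp_sigma_finite[OF PS]) (rule lborel.sigma_finite_measure_axioms)
  show "(\<lambda>\<omega>. \<integral>\<^sup>+u. ennreal (indicator {0..s} u * norm (B u \<omega>) ^ (2 * l)) \<partial>lborel) \<in> borel_measurable M"
    unfolding eqi using fm by (rule lborel.borel_measurable_nn_integral)
  have inner: "(\<integral>\<^sup>+\<omega>. f \<omega> u \<partial>M) \<le> ennreal (cB * s ^ l) * indicator {0..s} u" for u
  proof (cases "u \<in> {0..s}")
    case True
    have "(\<integral>\<^sup>+\<omega>. f \<omega> u \<partial>M) = (\<integral>\<^sup>+\<omega>. ennreal (norm (B u \<omega>) ^ (2 * l)) \<partial>M)"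
      unfolding f_def using True by (intro nn_integral_cong) auto
    also have "\<dots> \<le> ennreal (cB * u ^ l)"
      unfolding cB_def by (rule bm_norm_moment[OF BM _ l]) (use True in auto)
    also have "\<dots> \<le> ennreal (cB * s ^ l)"
      using True cB0 by (intro ennreal_leI mult_left_mono power_mono) auto
    finally show ?thesis using True by simp
  next
    case False
    then show ?thesis unfolding f_def by simp
  qed
  have "(\<integral>\<^sup>+\<omega>. (\<integral>\<^sup>+u. ennreal (indicator {0..s} u * norm (B u \<omega>) ^ (2 * l)) \<partial>lborel) \<partial>M)
      = (\<integral>\<^sup>+\<omega>. (\<integral>\<^sup>+u. f \<omega> u \<partial>lborel) \<partial>M)" unfolding eqi ..
  also have "\<dots> = (\<integral>\<^sup>+u. (\<integral>\<^sup>+\<omega>. f \<omega> u \<partial>M) \<partial>lborel)"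
    by (rule Fubini'[OF fm, symmetric])
  also have "\<dots> \<le> (\<integral>\<^sup>+u. ennreal (cB * s ^ l) * indicator {0..s} u \<partial>lborel)"
    by (intro nn_integral_mono inner)
  also have "\<dots> = ennreal (cB * s ^ l) * ennreal s"
    using s by (subst nn_integral_cmult_indicator) auto
  also have "\<dots> = ennreal (cB * s ^ l * s)"
    using s cB0 by (simp add: ennreal_mult)
  finally show "(\<integral>\<^sup>+\<omega>. (\<integral>\<^sup>+u. ennreal (indicator {0..s} u * norm (B u \<omega>) ^ (2 * l)) \<partial>lborel) \<partial>M)
          \<le> ennreal (real CARD('d) ^ (2 * l) * real CARD('d) * mom l * s ^ l * s)"
    unfolding cB_def .
qed



lemma mat_bound:
  fixes A :: "real^'n^'m"
  shows "\<exists>K\<ge>0. \<forall>z. norm (A *v z) \<le> K * norm z"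
  using bounded_linear.nonneg_bounded[OF matrix_vector_mul_bounded_linear[of A]]
  by (metis mult.commute)

lemma drift_lip:
  "\<exists>L\<ge>0. \<forall>y z. norm (drift \<alpha> \<beta> p R y - drift \<alpha> \<beta> p R z) \<le> L * norm (y - z)"
proof -
  obtain KR where KR: "KR \<ge> 0" "\<forall>z. norm (R *v z) \<le> KR * norm z" using mat_bound by blast
  define w where "w = (R - \<alpha> *\<^sub>R mat 1) *v p"
  have b: "norm (drift \<alpha> \<beta> p R y - drift \<alpha> \<beta> p R z) \<le> (KR + norm (onevec :: real^'a) * norm w) * norm (y - z)"
    for y z :: "real^'a"
  proof -
    have eq: "drift \<alpha> \<beta> p R y - drift \<alpha> \<beta> p R z
        = - (R *v (y - z)) + (max 0 (onevec \<bullet> y) - max 0 (onevec \<bullet> z)) *\<^sub>R w"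
      unfolding drift_def w_def by (simp add: matrix_vector_mult_diff_distrib algebra_simps scaleR_diff_left)
    have m: "\<bar>max 0 (onevec \<bullet> y) - max 0 (onevec \<bullet> z)\<bar> \<le> \<bar>onevec \<bullet> (y - z)\<bar>"
      by (simp add: inner_diff_right; linarith)
    also have "\<dots> \<le> norm (onevec :: real^'a) * norm (y - z)" by (rule Cauchy_Schwarz_ineq2)
    finally have m2: "\<bar>max 0 (onevec \<bullet> y) - max 0 (onevec \<bullet> z)\<bar> \<le> norm (onevec :: real^'a) * norm (y - z)" .
    have "norm (drift \<alpha> \<beta> p R y - drift \<alpha> \<beta> p R z) \<le> norm (R *v (y - z)) + \<bar>max 0 (onevec \<bullet> y) - max 0 (onevec \<bullet> z)\<bar> * norm w"
      unfolding eq by (metis norm_minus_cancel norm_scaleR norm_triangle_ineq)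
    also have "\<dots> \<le> KR * norm (y - z) + norm (onevec :: real^'a) * norm (y - z) * norm w"
      using KR m2 by (intro add_mono mult_right_mono) auto
    finally show ?thesis by (simp add: algebra_simps)
  qed
  show ?thesis using b KR by (intro exI[of _ "KR + norm (onevec :: real^'a) * norm w"]) auto
qed

lemma pow3:
  fixes a b c :: real
  assumes "a \<ge> 0" "b \<ge> 0" "c \<ge> 0"
  shows "(a + b + c)^n \<le> 3^n * (a^n + b^n + c^n)"
proof -
  define m where "m = max a (max b c)"
  have "a + b + c \<le> 3 * m" unfolding m_def by linarith
  then have "(a + b + c)^n \<le> (3 * m)^n" using assms by (intro power_mono) auto
  also have "\<dots> = 3^n * m^n" by (simp add: power_mult_distrib)
  also have "m^n \<le> a^n + b^n + c^n"
    unfolding m_def using assms by (auto simp: max_def zero_le_power)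
  then have "3^n * m^n \<le> 3^n * (a^n + b^n + c^n)" by simp
  finally show ?thesis .
qed

lemma omega_bound:
  fixes D a c2 I1 Ip K bs s :: real
  assumes n: "n \<ge> 1" and D0: "D \<ge> 0" and Db: "D \<le> a + c2 * I1 + K * bs"
    and nn: "a \<ge> 0" "c2 \<ge> 0" "I1 \<ge> 0" "K \<ge> 0" "bs \<ge> 0" "s \<ge> 0" "Ip \<ge> 0"
    and Ib: "I1^n \<le> s^(n-1) * Ip"
  shows "ennreal (D^n) \<le> ennreal (3^n * a^n) + ennreal (3^n * c2^n * s^(n-1)) * ennreal Ip
           + ennreal (3^n * K^n) * ennreal (bs^n)"
proof -
  have "D^n \<le> (a + c2 * I1 + K * bs)^n" using D0 Db by (intro power_mono) auto
  also have "\<dots> \<le> 3^n * (a^n + (c2 * I1)^n + (K * bs)^n)" using nn by (intro pow3) auto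
  also have "\<dots> = 3^n * a^n + 3^n * c2^n * I1^n + 3^n * K^n * bs^n"
    by (simp add: power_mult_distrib algebra_simps)
  also have "\<dots> \<le> 3^n * a^n + 3^n * c2^n * (s^(n-1) * Ip) + 3^n * K^n * bs^n"
    using Ib nn by (intro add_mono mult_left_mono order_refl) auto
  finally have r: "D^n \<le> 3^n * a^n + 3^n * c2^n * s^(n-1) * Ip + 3^n * K^n * bs^n"
    by (simp add: algebra_simps)
  have "ennreal (D^n) \<le> ennreal (3^n * a^n + 3^n * c2^n * s^(n-1) * Ip + 3^n * K^n * bs^n)"
    by (rule ennreal_leI[OF r])
  also have "\<dots> = ennreal (3^n * a^n) + ennreal (3^n * c2^n * s^(n-1)) * ennreal Ip
           + ennreal (3^n * K^n) * ennreal (bs^n)"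
    using nn by (simp add: ennreal_plus[symmetric] ennreal_mult[symmetric] del: ennreal_plus)
  finally show ?thesis .
qed

lemma expect_bound:
  assumes PS: "prob_space M" and Jm: "J \<in> borel_measurable M" and Zm: "Z \<in> borel_measurable M"
    and pw: "\<And>\<omega>. \<omega> \<in> space M \<Longrightarrow> ennreal (F \<omega>) \<le> ennreal A0 + ennreal A1 * J \<omega> + ennreal A2 * ennreal (Z \<omega>)"
    and EJ: "(\<integral>\<^sup>+\<omega>. J \<omega> \<partial>M) \<le> ennreal EJ" and EZ: "(\<integral>\<^sup>+\<omega>. ennreal (Z \<omega>) \<partial>M) \<le> ennreal EZ"
    and nn: "A0 \<ge> 0" "A1 \<ge> 0" "A2 \<ge> 0" "EJ \<ge> 0" "EZ \<ge> 0"
  shows "(\<integral>\<^sup>+\<omega>. ennreal (F \<omega>) \<partial>M) \<le> ennreal (A0 + A1 * EJ + A2 * EZ)"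
proof -
  interpret prob_space M by (rule PS)
  have "(\<integral>\<^sup>+\<omega>. ennreal (F \<omega>) \<partial>M) \<le> (\<integral>\<^sup>+\<omega>. ennreal A0 + ennreal A1 * J \<omega> + ennreal A2 * ennreal (Z \<omega>) \<partial>M)"
    by (intro nn_integral_mono pw)
  also have "\<dots> = ennreal A0 + ennreal A1 * (\<integral>\<^sup>+\<omega>. J \<omega> \<partial>M) + ennreal A2 * (\<integral>\<^sup>+\<omega>. ennreal (Z \<omega>) \<partial>M)"
    using Jm Zm by (simp add: nn_integral_add nn_integral_cmult emeasure_space_1)
  also have "\<dots> \<le> ennreal A0 + ennreal A1 * ennreal EJ + ennreal A2 * ennreal EZ"
    by (intro add_mono mult_left_mono EJ EZ order_refl) auto
  also have "\<dots> = ennreal (A0 + A1 * EJ + A2 * EZ)"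
    using nn by (simp add: ennreal_plus[symmetric] ennreal_mult[symmetric] del: ennreal_plus)
  finally show ?thesis .
qed

lemma henstock_to_nn:
  fixes b :: "real \<Rightarrow> real^'d"
  assumes cb: "continuous_on {0..s} b"
  shows "ennreal (integral {0..s} (\<lambda>u. norm (b u) ^ n))
           = (\<integral>\<^sup>+u. ennreal (indicator {0..s} u * norm (b u) ^ n) \<partial>lborel)"
proof -
  have "((\<lambda>u. norm (b u) ^ n) has_integral integral {0..s} (\<lambda>u. norm (b u) ^ n)) {0..s}"
    by (intro integrable_integral integrable_continuous_real continuous_intros cb)
  from nn_integral_has_integral_lebesgue[OF _ this] show ?thesis by simp
qed



lemma le_mult_W: fixes a W :: real shows "0 \<le> a \<Longrightarrow> 1 \<le> W \<Longrightarrow> a \<le> a * W"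
  using mult_left_mono[of 1 W a] by simp

lemma gbound:
  fixes g :: "real^'d \<Rightarrow> real^'d"
  assumes Lip: "\<forall>y z. norm (g y - g z) \<le> L * norm (y - z)" and L: "L \<ge> 0" and a1: "a1 > 0"
    and Va: "a1 * (norm x)\<^sup>2 \<le> Vx" and l: "l \<ge> 1"
  shows "norm (g x) ^ (2 * l) \<le> 3 ^ (2 * l) * (norm (g 0) ^ (2 * l) + L ^ (2 * l) / a1 ^ l) * (1 + Vx ^ l)"
proof -
  have V0: "Vx \<ge> 0" using Va a1 by (smt (verit) mult_nonneg_nonneg zero_le_power2)
  have "norm (g x) \<le> norm (g 0) + norm (g x - g 0)" by (metis norm_triangle_sub add.commute)
  also have "\<dots> \<le> norm (g 0) + L * norm x" using Lip by (metis add_left_mono diff_zero)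
  finally have gx: "norm (g x) \<le> norm (g 0) + L * norm x + 0" by simp
  have A: "norm (g x) ^ (2 * l) \<le> (norm (g 0) + L * norm x + 0) ^ (2 * l)"
    using gx by (intro power_mono) auto
  have B: "(norm (g 0) + L * norm x + 0) ^ (2 * l) \<le> 3 ^ (2 * l) * (norm (g 0) ^ (2 * l) + (L * norm x) ^ (2 * l) + 0 ^ (2 * l))"
    using L by (intro pow3) auto
  have C: "(L * norm x) ^ (2 * l) = L ^ (2 * l) * ((norm x)\<^sup>2) ^ l"
    by (simp add: power_mult_distrib power_mult)
  have D: "((norm x)\<^sup>2) ^ l \<le> (Vx / a1) ^ l"
    using Va a1 by (intro power_mono) (auto simp: field_simps)
  have E: "L ^ (2 * l) * ((norm x)\<^sup>2) ^ l \<le> L ^ (2 * l) * (Vx / a1) ^ l"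
    using L D by (intro mult_left_mono) auto
  have F: "L ^ (2 * l) * (Vx / a1) ^ l = L ^ (2 * l) / a1 ^ l * Vx ^ l" by (simp add: power_divide)
  have p1: "norm (g 0) ^ (2 * l) \<le> norm (g 0) ^ (2 * l) * (1 + Vx ^ l)"
    using V0 by (intro le_mult_W) auto
  have p2: "L ^ (2 * l) / a1 ^ l * Vx ^ l \<le> L ^ (2 * l) / a1 ^ l * (1 + Vx ^ l)"
    using L a1 by (intro mult_left_mono) auto
  have z: "(0::real) ^ (2 * l) = 0" using l by simp
  have "norm (g 0) ^ (2 * l) + (L * norm x) ^ (2 * l) + 0 ^ (2 * l)
      \<le> norm (g 0) ^ (2 * l) * (1 + Vx ^ l) + L ^ (2 * l) / a1 ^ l * (1 + Vx ^ l)"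
    using p1 p2 E F C z by linarith
  then have G: "3 ^ (2 * l) * (norm (g 0) ^ (2 * l) + (L * norm x) ^ (2 * l) + 0 ^ (2 * l))
      \<le> 3 ^ (2 * l) * (norm (g 0) ^ (2 * l) * (1 + Vx ^ l) + L ^ (2 * l) / a1 ^ l * (1 + Vx ^ l))"
    by (intro mult_left_mono) auto
  show ?thesis using A B G by (simp add: algebra_simps)
qed

lemma final1:
  fixes s y W Cg c1 c2 cB K :: real
  assumes s: "0 \<le> s" "s \<le> 1" and W: "W \<ge> 1" and y: "y \<ge> 0" "y ^ (2 * l) \<le> Cg * W"
    and l: "l \<ge> 1" and nn: "c1 \<ge> 0" "c2 \<ge> 0" "cB \<ge> 0" "K \<ge> 0"
  shows "3 ^ (2 * l) * (c1 * s * y) ^ (2 * l) + 3 ^ (2 * l) * c2 ^ (2 * l) * s ^ (2 * l - 1) * (cB * s ^ l * s)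
          + 3 ^ (2 * l) * K ^ (2 * l) * (cB * s ^ l)
         \<le> (3 ^ (2 * l) * c1 ^ (2 * l) * Cg + 3 ^ (2 * l) * c2 ^ (2 * l) * cB + 3 ^ (2 * l) * K ^ (2 * l) * cB) * W * s ^ l"
proof -
  define n where "n = 2 * l"
  have sl: "s ^ n \<le> s ^ l" unfolding n_def using s by (intro power_decreasing) auto
  have sp: "s ^ (n - 1) * (s ^ l * s) = s ^ (n + l)"
  proof -
    have e: "n - 1 + l + 1 = n + l" using l unfolding n_def by simp
    have "s ^ (n - 1 + l + 1) = s ^ (n - 1) * (s ^ l * s)" by (simp only: power_add power_one_right mult.assoc)
    then show ?thesis by (simp only: e)
  qed
  have sl2: "s ^ (n + l) \<le> s ^ l" using s by (intro power_decreasing) auto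
  have sl0: "s ^ l \<ge> 0" using s by auto
  have t1: "3 ^ n * (c1 * s * y) ^ n \<le> 3 ^ n * c1 ^ n * Cg * W * s ^ l"
  proof -
    have "3 ^ n * (c1 * s * y) ^ n = 3 ^ n * c1 ^ n * (s ^ n * y ^ n)" by (simp add: power_mult_distrib)
    also have "s ^ n * y ^ n \<le> s ^ l * (Cg * W)"
      using sl y sl0 s unfolding n_def by (intro mult_mono) auto
    then have "3 ^ n * c1 ^ n * (s ^ n * y ^ n) \<le> 3 ^ n * c1 ^ n * (s ^ l * (Cg * W))"
      using nn by (intro mult_left_mono) auto
    finally show ?thesis by (simp add: algebra_simps)
  qed
  have t2: "3 ^ n * c2 ^ n * s ^ (n - 1) * (cB * s ^ l * s) \<le> 3 ^ n * c2 ^ n * cB * W * s ^ l"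
  proof -
    have "3 ^ n * c2 ^ n * s ^ (n - 1) * (cB * s ^ l * s) = 3 ^ n * c2 ^ n * cB * s ^ (n + l)"
      using sp by (simp add: algebra_simps)
    also have "\<dots> \<le> 3 ^ n * c2 ^ n * cB * s ^ l"
      using sl2 nn by (intro mult_left_mono) auto
    also have "\<dots> \<le> 3 ^ n * c2 ^ n * cB * s ^ l * W"
      using W nn sl0 by (intro le_mult_W) auto
    finally show ?thesis by (simp add: algebra_simps)
  qed
  have t3: "3 ^ n * K ^ n * (cB * s ^ l) \<le> 3 ^ n * K ^ n * cB * W * s ^ l"
  proof -
    have "3 ^ n * K ^ n * cB * s ^ l \<le> 3 ^ n * K ^ n * cB * s ^ l * W"
      using W nn sl0 by (intro le_mult_W) auto
    then show ?thesis by (simp add: algebra_simps)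
  qed
  show ?thesis using t1 t2 t3 unfolding n_def by (simp add: algebra_simps)
qed

lemma final2:
  fixes s y W Cg c3 c2 cB K :: real
  assumes s: "0 \<le> s" "s \<le> 1" and W: "W \<ge> 1" and y: "y \<ge> 0" "y ^ (2 * l) \<le> Cg * W"
    and l: "l \<ge> 1" and nn: "c3 \<ge> 0" "c2 \<ge> 0" "cB \<ge> 0" "K \<ge> 0"
  shows "3 ^ (2 * l) * (c3 * s\<^sup>2 * y) ^ (2 * l) + 3 ^ (2 * l) * c2 ^ (2 * l) * s ^ (2 * l - 1) * (cB * s ^ l * s)
          + 3 ^ (2 * l) * K ^ (2 * l) * 0
         \<le> (3 ^ (2 * l) * c3 ^ (2 * l) * Cg + 3 ^ (2 * l) * c2 ^ (2 * l) * cB) * W * s ^ (3 * l)"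
proof -
  define n where "n = 2 * l"
  have sl: "(s\<^sup>2) ^ n \<le> s ^ (3 * l)" unfolding n_def using s
    by (subst power_mult[symmetric]) (intro power_decreasing, auto)
  have sp: "s ^ (n - 1) * (s ^ l * s) = s ^ (3 * l)"
  proof -
    have e: "n - 1 + l + 1 = 3 * l" using l unfolding n_def by simp
    have "s ^ (n - 1 + l + 1) = s ^ (n - 1) * (s ^ l * s)" by (simp only: power_add power_one_right mult.assoc)
    then show ?thesis by (simp only: e)
  qed
  have sl0: "s ^ (3 * l) \<ge> 0" using s by auto
  have t1: "3 ^ n * (c3 * s\<^sup>2 * y) ^ n \<le> 3 ^ n * c3 ^ n * Cg * W * s ^ (3 * l)"
  proof -
    have "3 ^ n * (c3 * s\<^sup>2 * y) ^ n = 3 ^ n * c3 ^ n * ((s\<^sup>2) ^ n * y ^ n)" by (simp add: power_mult_distrib)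
    also have "(s\<^sup>2) ^ n * y ^ n \<le> s ^ (3 * l) * (Cg * W)"
      using sl y sl0 s unfolding n_def by (intro mult_mono) auto
    then have "3 ^ n * c3 ^ n * ((s\<^sup>2) ^ n * y ^ n) \<le> 3 ^ n * c3 ^ n * (s ^ (3 * l) * (Cg * W))"
      using nn by (intro mult_left_mono) auto
    finally show ?thesis by (simp add: algebra_simps)
  qed
  have t2: "3 ^ n * c2 ^ n * s ^ (n - 1) * (cB * s ^ l * s) \<le> 3 ^ n * c2 ^ n * cB * W * s ^ (3 * l)"
  proof -
    have "3 ^ n * c2 ^ n * s ^ (n - 1) * (cB * s ^ l * s) = 3 ^ n * c2 ^ n * cB * s ^ (3 * l)"
      using sp by (simp add: algebra_simps)
    also have "\<dots> \<le> 3 ^ n * c2 ^ n * cB * s ^ (3 * l) * W"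
      using W nn sl0 by (intro le_mult_W) auto
    finally show ?thesis by (simp add: algebra_simps)
  qed
  show ?thesis using t1 t2 unfolding n_def by (simp add: algebra_simps)
qed



theorem lemmaA3:
  fixes M :: "'a measure"
    and B :: "real \<Rightarrow> 'a \<Rightarrow> real^'d"
    and X :: "real^'d \<Rightarrow> real \<Rightarrow> 'a \<Rightarrow> real^'d"
    and \<alpha> \<beta> ca2 \<kappa> c2 :: real
    and p v :: "real^'d"
    and P \<sigma> Q :: "real^'d^'d"
  defines "R \<equiv> (mat 1 - transpose P) ** diagm v"
  defines "\<gamma> \<equiv> matrix_inv R *v p"
  defines "g \<equiv> drift \<alpha> \<beta> p R"
  defines "V \<equiv> lyapV Q \<kappa> c2 p"
  assumes alpha: "\<alpha> > 0"
    and p_nonneg: "\<forall>i. p $ i \<ge> 0" and p_sum: "(\<Sum>i\<in>UNIV. p $ i) = 1"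
    and v_pos: "\<forall>i. v $ i > 0"
    and P_nonneg: "\<forall>i j. P $ i $ j \<ge> 0"
    and P_substoch: "\<forall>i. (\<Sum>j\<in>UNIV. P $ i $ j) \<le> 1"
    and P_diag: "\<forall>i. P $ i $ i = 0"
    and IP_inv: "invertible (mat 1 - P)"
    and eRp: "onevec \<bullet> (matrix_inv R *v p) = 1"
    and ca2: "ca2 > 0"
    and sigma_cov: "\<sigma> ** transpose \<sigma> =
          ca2 *\<^sub>R diagm p + H0 p + (\<Sum>k\<in>UNIV. (\<gamma> $ k * v $ k) *\<^sub>R Hk P k)
          + (mat 1 - transpose P) ** diagm v ** diagm \<gamma> ** (mat 1 - P)"
    and ellip: "\<exists>c>0. \<forall>\<xi>. \<xi> \<bullet> ((\<sigma> ** transpose \<sigma>) *v \<xi>) \<ge> c * (\<xi> \<bullet> \<xi>)"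
    and Q_sym: "transpose Q = Q"
    and Q_pd: "\<forall>\<xi>. \<xi> \<noteq> 0 \<longrightarrow> \<xi> \<bullet> (Q *v \<xi>) > 0"
    and Q_norm: "(\<Sum>i\<in>UNIV. \<Sum>j\<in>UNIV. \<bar>Q $ i $ j\<bar>) = 1"
    and Q_lyap1: "\<forall>\<xi>. \<xi> \<noteq> 0 \<longrightarrow> \<xi> \<bullet> ((Q ** (- R) + transpose (- R) ** Q) *v \<xi>) < 0"
    and Q_lyap2: "\<forall>\<xi>. \<xi> \<bullet> ((Q ** (- ((mat 1 - outerp p onevec) ** R))
                     + (- (transpose R ** (mat 1 - outerp onevec p))) ** Q) *v \<xi>) \<le> 0"
    and kappa: "\<kappa> > 0"
    and drift_cond: "\<exists>c1>0. \<exists>c1'. \<forall>y. generator g (\<sigma> ** transpose \<sigma>) (\<lambda>z. V z - c2) y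
                        \<le> - c1 * (V y - c2) + c1'"
    and c2: "c2 > 0"
    and V_bounds: "\<exists>a1>0. \<exists>A1>0. \<exists>A2>0. \<forall>y.
                      a1 * (norm y)\<^sup>2 - c2 \<le> V y - c2 \<and> V y - c2 \<le> A1 * (norm y)\<^sup>2 + A2"
    and BM: "brownian_motion M B"
    and sol: "\<forall>x. solves_sde M g \<sigma> B x (X x)"
  shows "\<forall>l::nat. l \<ge> 1 \<longrightarrow> (\<exists>C>0. \<forall>x s \<eta>. 0 \<le> s \<and> s < 1 \<and> 0 < \<eta> \<and> \<eta> < 1 \<longrightarrow>
           (\<integral>\<^sup>+\<omega>. ennreal (norm (X x s \<omega> - x) ^ (2 * l)) \<partial>M)
              \<le> ennreal (C * (1 + V x ^ l) * s ^ l) \<and>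
           (\<integral>\<^sup>+\<omega>. ennreal (norm (X x \<eta> \<omega> - (x + \<eta> *\<^sub>R g x + \<sigma> *v B \<eta> \<omega>)) ^ (2 * l)) \<partial>M)
              \<le> ennreal (C * (1 + V x ^ l) * \<eta> ^ (3 * l)))"
proof -
  have PS: "prob_space M" using BM unfolding brownian_motion_def by auto
  obtain L where L: "L \<ge> 0" "\<forall>y z. norm (g y - g z) \<le> L * norm (y - z)"
    using drift_lip[of \<alpha> \<beta> p R] unfolding g_def by blast
  obtain K where K: "K \<ge> 0" "\<forall>z. norm (\<sigma> *v z) \<le> K * norm z" using mat_bound by blast
  obtain a1 where a1: "a1 > 0" "\<And>y. a1 * (norm y)\<^sup>2 \<le> V y"
  proof -
    obtain a1 A1 A2 where "a1 > 0" "\<forall>y. a1 * (norm y)\<^sup>2 - c2 \<le> V y - c2 \<and> V y - c2 \<le> A1 * (norm y)\<^sup>2 + A2"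
      using V_bounds by blast
    then show ?thesis using that[of a1] by force
  qed
  define c1 where "c1 = L * exp L + 1"
  define cc where "cc = L * exp L * K"
  define c3 where "c3 = L * exp L"
  have c0: "c1 \<ge> 0" "cc \<ge> 0" "c3 \<ge> 0" unfolding c1_def cc_def c3_def using L K by auto
  have path: "continuous_on {0..1} (\<lambda>t. X x t \<omega>) \<and> continuous_on {0..1} (\<lambda>t. B t \<omega>) \<and>
      (\<forall>t\<in>{0..1}. X x t \<omega> = x + integral {0..t} (\<lambda>r. g (X x r \<omega>)) + \<sigma> *v B t \<omega>)"
    if \<omega>: "\<omega> \<in> space M" for x \<omega>
  proof -
    have s: "solves_sde M g \<sigma> B x (X x)" using sol by blast
    have c1': "continuous_on {0..} (\<lambda>t. X x t \<omega>)" and e: "\<forall>t\<ge>0. X x t \<omega> = x + integral {0..t} (\<lambda>r. g (X x r \<omega>)) + \<sigma> *v B t \<omega>"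
      using s \<omega> unfolding solves_sde_def by auto
    have c2': "continuous_on {0..} (\<lambda>t. B t \<omega>)" using BM \<omega> unfolding brownian_motion_def by auto
    show ?thesis using e by (auto intro: continuous_on_subset[OF c1'] continuous_on_subset[OF c2'])
  qed
  show ?thesis
  proof (intro allI impI)
    fix l :: nat assume l: "1 \<le> l"
    define cB where "cB = real CARD('d) ^ (2 * l) * real CARD('d) * mom l"
    have cB0: "cB \<ge> 0" unfolding cB_def mom_def by simp
    define Cg where "Cg = 3 ^ (2 * l) * (norm (g 0) ^ (2 * l) + L ^ (2 * l) / a1 ^ l)"
    define C1 where "C1 = 3 ^ (2 * l) * c1 ^ (2 * l) * Cg + 3 ^ (2 * l) * cc ^ (2 * l) * cB + 3 ^ (2 * l) * K ^ (2 * l) * cB"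
    define C2 where "C2 = 3 ^ (2 * l) * c3 ^ (2 * l) * Cg + 3 ^ (2 * l) * cc ^ (2 * l) * cB"
    define C where "C = C1 + C2 + 1"
    have Cg0: "Cg \<ge> 0" unfolding Cg_def using L a1 by auto
    have C10: "C1 \<ge> 0" unfolding C1_def using Cg0 cB0 c0 K by auto
    have C20: "C2 \<ge> 0" unfolding C2_def using Cg0 cB0 c0 K by auto
    have Cpos: "C > 0" unfolding C_def using C10 C20 by auto
    define J where "J t \<omega> = (\<integral>\<^sup>+u. ennreal (indicator {0..t} u * norm (B u \<omega>) ^ (2 * l)) \<partial>lborel)" for t \<omega>
    have Jm: "J t \<in> borel_measurable M" if "t \<ge> 0" for t
      unfolding J_def using bm_time_int(1)[OF BM that l] by simp
    have EJ: "(\<integral>\<^sup>+\<omega>. J t \<omega> \<partial>M) \<le> ennreal (cB * t ^ l * t)" if "t \<ge> 0" for t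
      unfolding J_def cB_def using bm_time_int(2)[OF BM that l] by simp
    have Ipw: "integral {0..t} (\<lambda>u. norm (B u \<omega>)) \<ge> 0 \<and>
        (integral {0..t} (\<lambda>u. norm (B u \<omega>))) ^ (2 * l) \<le> t ^ (2 * l - 1) * integral {0..t} (\<lambda>u. norm (B u \<omega>) ^ (2 * l)) \<and>
        integral {0..t} (\<lambda>u. norm (B u \<omega>) ^ (2 * l)) \<ge> 0 \<and>
        ennreal (integral {0..t} (\<lambda>u. norm (B u \<omega>) ^ (2 * l))) = J t \<omega>"
      if \<omega>: "\<omega> \<in> space M" and t: "t \<in> {0..1}" for t \<omega>
    proof -
      have cb: "continuous_on {0..t} (\<lambda>u. B u \<omega>)"
        using path[OF \<omega>, of x] t by (auto intro: continuous_on_subset)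
      have cbn: "continuous_on {0..t} (\<lambda>u. norm (B u \<omega>))" by (intro continuous_intros cb)
      have "integral {0..t} (\<lambda>u. norm (B u \<omega>)) \<ge> 0"
        by (intro integral_nonneg integrable_continuous_real cbn) auto
      moreover have "(integral {0..t} (\<lambda>u. norm (B u \<omega>))) ^ (2 * l) \<le> t ^ (2 * l - 1) * integral {0..t} (\<lambda>u. norm (B u \<omega>) ^ (2 * l))"
        using t l by (intro int_pow_le cbn) auto
      moreover have "integral {0..t} (\<lambda>u. norm (B u \<omega>) ^ (2 * l)) \<ge> 0"
        by (intro integral_nonneg integrable_continuous_real continuous_intros cb) auto
      moreover have "ennreal (integral {0..t} (\<lambda>u. norm (B u \<omega>) ^ (2 * l))) = J t \<omega>"
        unfolding J_def by (rule henstock_to_nn[OF cb])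
      ultimately show ?thesis by blast
    qed
    show "\<exists>C>0. \<forall>x s \<eta>. 0 \<le> s \<and> s < 1 \<and> 0 < \<eta> \<and> \<eta> < 1 \<longrightarrow>
           (\<integral>\<^sup>+\<omega>. ennreal (norm (X x s \<omega> - x) ^ (2 * l)) \<partial>M)
              \<le> ennreal (C * (1 + V x ^ l) * s ^ l) \<and>
           (\<integral>\<^sup>+\<omega>. ennreal (norm (X x \<eta> \<omega> - (x + \<eta> *\<^sub>R g x + \<sigma> *v B \<eta> \<omega>)) ^ (2 * l)) \<partial>M)
              \<le> ennreal (C * (1 + V x ^ l) * \<eta> ^ (3 * l))"
    proof (intro exI[of _ C] conjI allI impI Cpos)
      fix x :: "real^'d" and s \<eta> :: real assume H: "0 \<le> s \<and> s < 1 \<and> 0 < \<eta> \<and> \<eta> < 1"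
      define W where "W = 1 + V x ^ l"
      have V0: "V x \<ge> 0" using a1(1) a1(2)[of x] by (smt (verit) mult_nonneg_nonneg zero_le_power2)
      have W1: "W \<ge> 1" unfolding W_def using V0 by simp
      have gb: "norm (g x) ^ (2 * l) \<le> Cg * W"
        unfolding Cg_def W_def using gbound[OF L(2) L(1) a1(1) a1(2)[of x] l] by (simp add: algebra_simps)
      have s01: "s \<in> {0..1}" and e01: "\<eta> \<in> {0..1}" using H by auto
      have first: "(\<integral>\<^sup>+\<omega>. ennreal (norm (X x s \<omega> - x) ^ (2 * l)) \<partial>M)
          \<le> ennreal (3 ^ (2 * l) * (c1 * s * norm (g x)) ^ (2 * l)
             + 3 ^ (2 * l) * cc ^ (2 * l) * s ^ (2 * l - 1) * (cB * s ^ l * s)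
             + 3 ^ (2 * l) * K ^ (2 * l) * (cB * s ^ l))"
      proof (rule expect_bound[OF PS Jm[of s]])
        show "0 \<le> s" using H by simp
        have [measurable]: "B s \<in> borel_measurable M" using bm_meas[OF BM, of s] H by simp
        show "(\<lambda>\<omega>. norm (B s \<omega>) ^ (2 * l)) \<in> borel_measurable M" by measurable
        show "(\<integral>\<^sup>+\<omega>. J s \<omega> \<partial>M) \<le> ennreal (cB * s ^ l * s)" using EJ H by simp
        show "(\<integral>\<^sup>+\<omega>. ennreal (norm (B s \<omega>) ^ (2 * l)) \<partial>M) \<le> ennreal (cB * s ^ l)"
          unfolding cB_def using bm_norm_moment[OF BM _ l, of s] H by simp
        show "0 \<le> 3 ^ (2 * l) * (c1 * s * norm (g x)) ^ (2 * l)" using c0 H by simp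
        show "0 \<le> 3 ^ (2 * l) * cc ^ (2 * l) * s ^ (2 * l - 1)" using c0 H by simp
        show "0 \<le> (3::real) ^ (2 * l) * K ^ (2 * l)" using K by simp
        show "0 \<le> cB * s ^ l * s" using cB0 H by simp
        show "0 \<le> cB * s ^ l" using cB0 H by simp
        fix \<omega> assume \<omega>: "\<omega> \<in> space M"
        note P = path[OF \<omega>, of x]
        note I = Ipw[OF \<omega> s01]
        have D: "norm (X x s \<omega> - x) \<le> c1 * s * norm (g x) + cc * integral {0..s} (\<lambda>u. norm (B u \<omega>)) + K * norm (B s \<omega>)"
          using pathwise(1)[where Y="\<lambda>t. X x t \<omega>" and b="\<lambda>t. B t \<omega>" and g=g and \<sigma>=\<sigma> and L=L and K=K and x=x and t=s] P L K s01
          unfolding c1_def cc_def by auto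
        have "ennreal (norm (X x s \<omega> - x) ^ (2 * l)) \<le> ennreal (3 ^ (2 * l) * (c1 * s * norm (g x)) ^ (2 * l))
           + ennreal (3 ^ (2 * l) * cc ^ (2 * l) * s ^ (2 * l - 1)) * ennreal (integral {0..s} (\<lambda>u. norm (B u \<omega>) ^ (2 * l)))
           + ennreal (3 ^ (2 * l) * K ^ (2 * l)) * ennreal (norm (B s \<omega>) ^ (2 * l))"
          using l H c0 K I by (intro omega_bound[OF _ _ D]) (auto simp: power_mult_distrib)
        then show "ennreal (norm (X x s \<omega> - x) ^ (2 * l)) \<le> ennreal (3 ^ (2 * l) * (c1 * s * norm (g x)) ^ (2 * l))
           + ennreal (3 ^ (2 * l) * cc ^ (2 * l) * s ^ (2 * l - 1)) * J s \<omega>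
           + ennreal (3 ^ (2 * l) * K ^ (2 * l)) * ennreal (norm (B s \<omega>) ^ (2 * l))"
          using I by simp
      qed
      also have "\<dots> \<le> ennreal (C * (1 + V x ^ l) * s ^ l)"
      proof (rule ennreal_leI)
        have "3 ^ (2 * l) * (c1 * s * norm (g x)) ^ (2 * l)
             + 3 ^ (2 * l) * cc ^ (2 * l) * s ^ (2 * l - 1) * (cB * s ^ l * s)
             + 3 ^ (2 * l) * K ^ (2 * l) * (cB * s ^ l) \<le> C1 * W * s ^ l"
          unfolding C1_def using final1[of s W "norm (g x)" l Cg c1 cc cB K] H W1 gb l c0 cB0 K by auto
        also have "\<dots> \<le> C * W * s ^ l"
          unfolding C_def using C20 W1 H by (intro mult_right_mono) auto
        finally show "3 ^ (2 * l) * (c1 * s * norm (g x)) ^ (2 * l)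
             + 3 ^ (2 * l) * cc ^ (2 * l) * s ^ (2 * l - 1) * (cB * s ^ l * s)
             + 3 ^ (2 * l) * K ^ (2 * l) * (cB * s ^ l) \<le> C * (1 + V x ^ l) * s ^ l" unfolding W_def .
      qed
      finally show "(\<integral>\<^sup>+\<omega>. ennreal (norm (X x s \<omega> - x) ^ (2 * l)) \<partial>M) \<le> ennreal (C * (1 + V x ^ l) * s ^ l)" .
      have second: "(\<integral>\<^sup>+\<omega>. ennreal (norm (X x \<eta> \<omega> - (x + \<eta> *\<^sub>R g x + \<sigma> *v B \<eta> \<omega>)) ^ (2 * l)) \<partial>M)
          \<le> ennreal (3 ^ (2 * l) * (c3 * \<eta>\<^sup>2 * norm (g x)) ^ (2 * l)
             + 3 ^ (2 * l) * cc ^ (2 * l) * \<eta> ^ (2 * l - 1) * (cB * \<eta> ^ l * \<eta>)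
             + 3 ^ (2 * l) * K ^ (2 * l) * 0)"
      proof (rule expect_bound[OF PS Jm[of \<eta>], where Z="\<lambda>_. 0"])
        show "0 \<le> \<eta>" using H by simp
        show "(\<lambda>\<omega>. 0::real) \<in> borel_measurable M" by simp
        show "(\<integral>\<^sup>+\<omega>. J \<eta> \<omega> \<partial>M) \<le> ennreal (cB * \<eta> ^ l * \<eta>)" using EJ H by simp
        show "(\<integral>\<^sup>+\<omega>. ennreal 0 \<partial>M) \<le> ennreal 0" by simp
        show "0 \<le> 3 ^ (2 * l) * (c3 * \<eta>\<^sup>2 * norm (g x)) ^ (2 * l)" using c0 H by simp
        show "0 \<le> 3 ^ (2 * l) * cc ^ (2 * l) * \<eta> ^ (2 * l - 1)" using c0 H by simp
        show "0 \<le> (3::real) ^ (2 * l) * K ^ (2 * l)" using K by simp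
        show "0 \<le> cB * \<eta> ^ l * \<eta>" using cB0 H by simp
        show "0 \<le> (0::real)" by simp
        fix \<omega> assume \<omega>: "\<omega> \<in> space M"
        note P = path[OF \<omega>, of x]
        note I = Ipw[OF \<omega> e01]
        have D: "norm (X x \<eta> \<omega> - (x + \<eta> *\<^sub>R g x + \<sigma> *v B \<eta> \<omega>)) \<le> c3 * \<eta>\<^sup>2 * norm (g x) + cc * integral {0..\<eta>} (\<lambda>u. norm (B u \<omega>)) + K * 0"
          using pathwise(2)[where Y="\<lambda>t. X x t \<omega>" and b="\<lambda>t. B t \<omega>" and g=g and \<sigma>=\<sigma> and L=L and K=K and x=x and t=\<eta>] P L K e01
          unfolding c3_def cc_def by auto
        have OB: "ennreal (norm (X x \<eta> \<omega> - (x + \<eta> *\<^sub>R g x + \<sigma> *v B \<eta> \<omega>)) ^ (2 * l)) \<le> ennreal (3 ^ (2 * l) * (c3 * \<eta>\<^sup>2 * norm (g x)) ^ (2 * l))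
           + ennreal (3 ^ (2 * l) * cc ^ (2 * l) * \<eta> ^ (2 * l - 1)) * ennreal (integral {0..\<eta>} (\<lambda>u. norm (B u \<omega>) ^ (2 * l)))
           + ennreal (3 ^ (2 * l) * K ^ (2 * l)) * ennreal (0 ^ (2 * l))"
          using l H c0 K I by (intro omega_bound[OF _ _ D]) auto
        then show "ennreal (norm (X x \<eta> \<omega> - (x + \<eta> *\<^sub>R g x + \<sigma> *v B \<eta> \<omega>)) ^ (2 * l)) \<le> ennreal (3 ^ (2 * l) * (c3 * \<eta>\<^sup>2 * norm (g x)) ^ (2 * l))
           + ennreal (3 ^ (2 * l) * cc ^ (2 * l) * \<eta> ^ (2 * l - 1)) * J \<eta> \<omega>
           + ennreal (3 ^ (2 * l) * K ^ (2 * l)) * ennreal 0"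
        proof -
          have z: "(0::real) ^ (2 * l) = 0" using l by simp
          show ?thesis using OB I unfolding z by simp
        qed
      qed
      also have "\<dots> \<le> ennreal (C * (1 + V x ^ l) * \<eta> ^ (3 * l))"
      proof (rule ennreal_leI)
        have "3 ^ (2 * l) * (c3 * \<eta>\<^sup>2 * norm (g x)) ^ (2 * l)
             + 3 ^ (2 * l) * cc ^ (2 * l) * \<eta> ^ (2 * l - 1) * (cB * \<eta> ^ l * \<eta>)
             + 3 ^ (2 * l) * K ^ (2 * l) * 0 \<le> C2 * W * \<eta> ^ (3 * l)"
          unfolding C2_def using final2[of \<eta> W "norm (g x)" l Cg c3 cc cB K] H W1 gb l c0 cB0 K by auto
        also have "\<dots> \<le> C * W * \<eta> ^ (3 * l)"
          unfolding C_def using C10 W1 H by (intro mult_right_mono) auto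
        finally show "3 ^ (2 * l) * (c3 * \<eta>\<^sup>2 * norm (g x)) ^ (2 * l)
             + 3 ^ (2 * l) * cc ^ (2 * l) * \<eta> ^ (2 * l - 1) * (cB * \<eta> ^ l * \<eta>)
             + 3 ^ (2 * l) * K ^ (2 * l) * 0 \<le> C * (1 + V x ^ l) * \<eta> ^ (3 * l)" unfolding W_def .
      qed
      finally show "(\<integral>\<^sup>+\<omega>. ennreal (norm (X x \<eta> \<omega> - (x + \<eta> *\<^sub>R g x + \<sigma> *v B \<eta> \<omega>)) ^ (2 * l)) \<partial>M)
              \<le> ennreal (C * (1 + V x ^ l) * \<eta> ^ (3 * l))" .
    qed
  qed
qed


end
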